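(* Let $\{x_n\}$ be a sequence in $\Delta([a,b])$ converging to $x^*$. Then there exist an increasing sequence $\{x'_n\}$ and a decreasing sequence $\{x''_n\}$ in $\Delta([a,b])$ such that $x'_n\le x_n\le x''_n$ for all $n$ and $\lim_n x'_n=x^*=\lim_n x''_n$.
   Context: $a<b$ reals; $\Delta([a,b])$ is the set of Borel probability measures on $[a,b]$ with the topology of weak convergence. The order $\le$ is first-order stochastic dominance: $q\le p$ iff $\int h\,dq\le\int h\,dp$ for every bounded continuous nondecreasing $h:[a,b]\to\mathbf{R}$; increasing/decreasing refer to this order. *)

theory Defs
  imports "HOL-Probability.Probability"
begin

definition Delta :: "real \<Rightarrow> real \<Rightarrow> real measure set" where
  "Delta a b = {M. prob_space M \<and> sets M = sets (restrict_space borel {a..b})}"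

definition weak_conv_on :: "real \<Rightarrow> real \<Rightarrow> (nat \<Rightarrow> real measure) \<Rightarrow> real measure \<Rightarrow> bool" where
  "weak_conv_on a b xs x \<longleftrightarrow>
     (\<forall>f :: real \<Rightarrow> real. continuous_on {a..b} f \<and> bounded (f ` {a..b}) \<longrightarrow>
        (\<lambda>n. \<integral>t. f t \<partial>(xs n)) \<longlonglongrightarrow> (\<integral>t. f t \<partial>x))"

definition fosd :: "real \<Rightarrow> real \<Rightarrow> real measure \<Rightarrow> real measure \<Rightarrow> bool" where
  "fosd a b q p \<longleftrightarrow>
     (\<forall>h :: real \<Rightarrow> real. continuous_on {a..b} h \<and> bounded (h ` {a..b}) \<and> mono_on {a..b} h \<longrightarrow>
        (\<integral>t. h t \<partial>q) \<le> (\<integral>t. h t \<partial>p))"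

end

theory Submission
  imports Defs
begin

definition cl :: "real \<Rightarrow> real \<Rightarrow> real \<Rightarrow> real" where
  "cl a b t = max a (min b t)"

lemma cl_in: "a \<le> b \<Longrightarrow> cl a b t \<in> {a..b}"
  by (auto simp: cl_def)

lemma cl_id: "t \<in> {a..b} \<Longrightarrow> cl a b t = t"
  by (auto simp: cl_def)

lemma cl_cont: "continuous_on UNIV (cl a b)"
  unfolding cl_def by (intro continuous_intros)

lemma cl_tendsto: "(X \<longlongrightarrow> l) F \<Longrightarrow> ((\<lambda>n. cl a b (X n)) \<longlongrightarrow> cl a b l) F"
  unfolding cl_def by (intro tendsto_intros)

lemma ext_cont:
  fixes f :: "real \<Rightarrow> real"
  assumes "a \<le> b" "continuous_on {a..b} f"
  shows "continuous_on UNIV (\<lambda>t. f (cl a b t))"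
  by (rule continuous_on_compose2[OF assms(2) cl_cont]) (use cl_in[OF assms(1)] in auto)

lemma ext_meas:
  fixes f :: "real \<Rightarrow> real"
  assumes "a \<le> b" "continuous_on {a..b} f"
  shows "(\<lambda>t. f (cl a b t)) \<in> borel_measurable borel"
  using ext_cont[OF assms] by (intro borel_measurable_continuous_onI) 

lemma space_Delta:
  assumes "M \<in> Delta a b" shows "space M = {a..b}"
proof -
  have "sets M = sets (restrict_space borel {a..b})" using assms by (simp add: Delta_def)
  then have "space M = space (restrict_space borel {a..b})" by (rule sets_eq_imp_space_eq)
  then show ?thesis by (simp add: space_restrict_space)
qed

lemma id_meas_Delta:
  assumes "M \<in> Delta a b" shows "(\<lambda>t. t) \<in> measurable M borel"
proof -
  have "sets M = sets (restrict_space borel {a..b})" using assms by (simp add: Delta_def)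
  then have eq: "measurable M borel = measurable (restrict_space borel {a..b}) borel"
    by (rule measurable_cong_sets) simp
  have "(\<lambda>t::real. t) \<in> measurable (restrict_space borel {a..b}) borel"
    by (rule measurable_restrict_space1) simp
  then show ?thesis unfolding eq .
qed

lemma int_Delta:
  fixes f :: "real \<Rightarrow> real"
  assumes "M \<in> Delta a b" "a \<le> b" "continuous_on {a..b} f"
  shows "integral\<^sup>L M f = integral\<^sup>L (distr M borel (\<lambda>t. t)) (\<lambda>t. f (cl a b t))"
proof -
  have "integral\<^sup>L M f = integral\<^sup>L M (\<lambda>t. f (cl a b t))"
    by (rule Bochner_Integration.integral_cong) (auto simp: space_Delta[OF assms(1)] cl_id)
  also have "\<dots> = integral\<^sup>L (distr M borel (\<lambda>t. t)) (\<lambda>t. f (cl a b t))"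
    using integral_distr[OF id_meas_Delta[OF assms(1)] ext_meas[OF assms(2,3)]] by simp
  finally show ?thesis .
qed

lemma real_distr_Delta:
  assumes "M \<in> Delta a b"
  shows "real_distribution (distr M borel (\<lambda>t. t))"
proof -
  have "prob_space M" using assms by (auto simp: Delta_def)
  then show ?thesis
    unfolding real_distribution_def real_distribution_axioms_def
    using prob_space.prob_space_distr[OF \<open>prob_space M\<close> id_meas_Delta[OF assms]] by simp
qed

lemma distr_Delta:
  assumes "prob_space \<Omega>" "Z \<in> borel_measurable \<Omega>" "\<And>w. Z w \<in> {a..b}"
  shows "distr \<Omega> (restrict_space borel {a..b}) Z \<in> Delta a b"
proof -
  have m: "Z \<in> measurable \<Omega> (restrict_space borel {a..b})"
    by (rule measurable_restrict_space2[OF _ assms(2)]) (use assms(3) in blast)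
  show ?thesis unfolding Delta_def
    using prob_space.prob_space_distr[OF assms(1) m] by auto
qed

lemma int_distr_Delta:
  fixes Z :: "'a \<Rightarrow> real" and f :: "real \<Rightarrow> real"
  assumes "prob_space \<Omega>" "Z \<in> borel_measurable \<Omega>" "\<And>w. Z w \<in> {a..b}" "a \<le> b"
    "continuous_on {a..b} f"
  shows "integral\<^sup>L (distr \<Omega> (restrict_space borel {a..b}) Z) f = (\<integral>w. f (Z w) \<partial>\<Omega>)"
proof -
  have m: "Z \<in> measurable \<Omega> (restrict_space borel {a..b})"
    by (rule measurable_restrict_space2[OF _ assms(2)]) (use assms(3) in blast)
  have "integral\<^sup>L (distr \<Omega> (restrict_space borel {a..b}) Z) f
      = integral\<^sup>L (distr \<Omega> (restrict_space borel {a..b}) Z) (\<lambda>t. f (cl a b t))"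
    by (rule Bochner_Integration.integral_cong) (auto simp: space_restrict_space cl_id)
  also have "\<dots> = (\<integral>w. f (cl a b (Z w)) \<partial>\<Omega>)"
    using integral_distr[OF m measurable_restrict_space1[OF ext_meas[OF assms(4,5)]]] by simp
  also have "\<dots> = (\<integral>w. f (Z w) \<partial>\<Omega>)"
    using assms(3) by (simp add: cl_id)
  finally show ?thesis .
qed

lemma integrable_comp:
  fixes W :: "'a \<Rightarrow> real" and h :: "real \<Rightarrow> real"
  assumes "prob_space \<Omega>" "W \<in> borel_measurable \<Omega>" "\<And>w. W w \<in> {a..b}" "a \<le> b"
    "continuous_on {a..b} h"
  shows "integrable \<Omega> (\<lambda>w. h (W w))"
proof -
  obtain B where B: "\<And>t. t \<in> {a..b} \<Longrightarrow> norm (h t) \<le> B"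
  proof -
    have "compact (h ` {a..b})" by (intro compact_continuous_image assms) auto
    then obtain B where "\<forall>x\<in>h ` {a..b}. norm x \<le> B" by (auto dest!: compact_imp_bounded simp: bounded_iff)
    then show ?thesis by (intro that[of B]) auto
  qed
  have eq: "(\<lambda>w. h (W w)) = (\<lambda>w. h (cl a b (W w)))"
    using assms(3) by (simp add: cl_id)
  have mf: "(\<lambda>w. h (W w)) \<in> borel_measurable \<Omega>"
    unfolding eq using ext_meas[OF assms(4,5)] assms(2) by (rule measurable_compose[rotated])
  show ?thesis
  proof (rule finite_measure.integrable_const_bound[OF prob_space.finite_measure[OF assms(1)], where B=B])
    show "AE x in \<Omega>. norm (h (W x)) \<le> B" by (rule AE_I2) (rule B[OF assms(3)])
  qed (rule mf)
qed

lemma conv_comp: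
  fixes W :: "nat \<Rightarrow> 'a \<Rightarrow> real" and h :: "real \<Rightarrow> real"
  assumes "prob_space \<Omega>" "\<And>n. W n \<in> borel_measurable \<Omega>" "V \<in> borel_measurable \<Omega>"
    "\<And>n w. W n w \<in> {a..b}" "\<And>w. V w \<in> {a..b}" "a \<le> b"
    "continuous_on {a..b} h" "\<And>w. w \<in> space \<Omega> \<Longrightarrow> (\<lambda>n. W n w) \<longlonglongrightarrow> V w"
  shows "(\<lambda>n. \<integral>w. h (W n w) \<partial>\<Omega>) \<longlonglongrightarrow> (\<integral>w. h (V w) \<partial>\<Omega>)"
proof -
  obtain B where B: "\<And>t. t \<in> {a..b} \<Longrightarrow> norm (h t) \<le> B"
  proof -
    have "compact (h ` {a..b})" by (intro compact_continuous_image assms) auto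
    then obtain B where "\<forall>x\<in>h ` {a..b}. norm x \<le> B" by (auto dest!: compact_imp_bounded simp: bounded_iff)
    then show ?thesis by (intro that[of B]) auto
  qed
  have eq: "(\<lambda>w. h (W n w)) = (\<lambda>w. h (cl a b (W n w)))" for n
    using assms(4) by (simp add: cl_id)
  have eq2: "(\<lambda>w. h (V w)) = (\<lambda>w. h (cl a b (V w)))"
    using assms(5) by (simp add: cl_id)
  show ?thesis
  proof (rule integral_dominated_convergence[where w="\<lambda>_. B"])
    show "(\<lambda>w. h (V w)) \<in> borel_measurable \<Omega>"
      unfolding eq2 using ext_meas[OF assms(6,7)] assms(3) by (rule measurable_compose[rotated])
    show "(\<lambda>w. h (W n w)) \<in> borel_measurable \<Omega>" for n
      unfolding eq using ext_meas[OF assms(6,7)] assms(2) by (rule measurable_compose[rotated])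
    show "integrable \<Omega> (\<lambda>_. B)"
      using prob_space.finite_measure[OF assms(1)] by (simp add: finite_measure.integrable_const)
    show "AE w in \<Omega>. norm (h (W n w)) \<le> B" for n
      by (rule AE_I2) (rule B[OF assms(4)])
    have "(\<lambda>n. h (cl a b (W n w))) \<longlonglongrightarrow> h (cl a b (V w))" if "w \<in> space \<Omega>" for w
    proof -
      have ic: "isCont (\<lambda>t. h (cl a b t)) y" for y
        using ext_cont[OF assms(6,7)] continuous_on_eq_continuous_at[OF open_UNIV] by blast
      show ?thesis by (rule isCont_tendsto_compose[OF ic assms(8)[OF that]])
    qed
    then show "AE w in \<Omega>. (\<lambda>n. h (W n w)) \<longlonglongrightarrow> h (V w)"
      using cl_id[OF assms(4)] cl_id[OF assms(5)] by (intro AE_I2) simp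
  qed
qed

lemma inf_tail_conv:
  fixes z :: "nat \<Rightarrow> real"
  assumes "z \<longlonglongrightarrow> l" "\<And>k. z k \<in> {a..b}"
  shows "(\<lambda>n. INF k\<in>{n..}. z k) \<longlonglongrightarrow> l"
proof (rule LIMSEQ_I)
  fix e :: real assume e: "0 < e"
  from LIMSEQ_D[OF assms(1), of "e/2"] e obtain N where N: "\<And>k. N \<le> k \<Longrightarrow> norm (z k - l) < e/2" by auto
  have bdd: "bdd_below (z ` {n..})" for n using assms(2) by (auto intro: bdd_belowI[where m=a])
  show "\<exists>N. \<forall>n\<ge>N. norm ((INF k\<in>{n..}. z k) - l) < e"
  proof (intro exI allI impI)
    fix n assume n: "N \<le> n"
    have "l - e/2 \<le> (INF k\<in>{n..}. z k)"
    proof (rule cINF_greatest)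
      fix k assume "k \<in> {n..}"
      then have "N \<le> k" using n by auto
      then have "\<bar>z k - l\<bar> < e/2" using N[of k] by simp
      then show "l - e/2 \<le> z k" by linarith
    qed auto
    moreover have "(INF k\<in>{n..}. z k) \<le> z n" by (rule cINF_lower[OF bdd]) auto
    moreover have "\<bar>z n - l\<bar> < e/2" using N[OF n] by simp
    ultimately show "norm ((INF k\<in>{n..}. z k) - l) < e" using e unfolding real_norm_def by linarith
  qed
qed

lemma sup_tail_conv:
  fixes z :: "nat \<Rightarrow> real"
  assumes "z \<longlonglongrightarrow> l" "\<And>k. z k \<in> {a..b}"
  shows "(\<lambda>n. SUP k\<in>{n..}. z k) \<longlonglongrightarrow> l"
proof (rule LIMSEQ_I)
  fix e :: real assume e: "0 < e"
  from LIMSEQ_D[OF assms(1), of "e/2"] e obtain N where N: "\<And>k. N \<le> k \<Longrightarrow> norm (z k - l) < e/2" by auto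
  have bdd: "bdd_above (z ` {n..})" for n using assms(2) by (auto intro: bdd_aboveI[where M=b])
  show "\<exists>N. \<forall>n\<ge>N. norm ((SUP k\<in>{n..}. z k) - l) < e"
  proof (intro exI allI impI)
    fix n assume n: "N \<le> n"
    have "(SUP k\<in>{n..}. z k) \<le> l + e/2"
    proof (rule cSUP_least)
      fix k assume "k \<in> {n..}"
      then have "N \<le> k" using n by auto
      then have "\<bar>z k - l\<bar> < e/2" using N[of k] by simp
      then show "z k \<le> l + e/2" by linarith
    qed auto
    moreover have "z n \<le> (SUP k\<in>{n..}. z k)" by (rule cSUP_upper[OF _ bdd]) auto
    moreover have "\<bar>z n - l\<bar> < e/2" using N[OF n] by simp
    ultimately show "norm ((SUP k\<in>{n..}. z k) - l) < e" using e unfolding real_norm_def by linarith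
  qed
qed


theorem mainTheorem10:
  fixes a b :: real and xs :: "nat \<Rightarrow> real measure" and x :: "real measure"
  assumes "a < b"
    and "\<And>n. xs n \<in> Delta a b"
    and "x \<in> Delta a b"
    and "weak_conv_on a b xs x"
  shows "\<exists>xl xu :: nat \<Rightarrow> real measure.
           (\<forall>n. xl n \<in> Delta a b \<and> xu n \<in> Delta a b) \<and>
           (\<forall>m n. m \<le> n \<longrightarrow> fosd a b (xl m) (xl n)) \<and>
           (\<forall>m n. m \<le> n \<longrightarrow> fosd a b (xu n) (xu m)) \<and>
           (\<forall>n. fosd a b (xl n) (xs n) \<and> fosd a b (xs n) (xu n)) \<and>
           weak_conv_on a b xl x \<and> weak_conv_on a b xu x"
proof -
  have ab: "a \<le> b" using assms(1) by simp
  define E where "E n = distr (xs n) borel (\<lambda>t. t)" for n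
  define Ex where "Ex = distr x borel (\<lambda>t. t)"
  have RE: "real_distribution (E n)" for n unfolding E_def by (rule real_distr_Delta[OF assms(2)])
  have REx: "real_distribution Ex" unfolding Ex_def by (rule real_distr_Delta[OF assms(3)])
  have weak: "weak_conv_m E Ex"
  proof (rule integral_bdd_continuous_conv_imp_weak_conv[OF RE REx])
    fix f :: "real \<Rightarrow> real" assume cont: "\<And>x. isCont f x" and bd: "\<And>x. \<bar>f x\<bar> \<le> 1"
    have fm: "f \<in> borel_measurable borel"
      using cont by (intro borel_measurable_continuous_onI continuous_at_imp_continuous_on) auto
    have c: "continuous_on {a..b} f" using cont by (intro continuous_at_imp_continuous_on) auto
    have bnd: "bounded (f ` {a..b})" using bd by (auto simp: bounded_iff)
    have "(\<lambda>n. \<integral>t. f t \<partial>(xs n)) \<longlonglongrightarrow> (\<integral>t. f t \<partial>x)"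
      using assms(4) c bnd unfolding weak_conv_on_def by blast
    moreover have "integral\<^sup>L (E n) f = (\<integral>t. f t \<partial>(xs n))" for n
      unfolding E_def using integral_distr[OF id_meas_Delta[OF assms(2)] fm] by simp
    moreover have "integral\<^sup>L Ex f = (\<integral>t. f t \<partial>x)"
      unfolding Ex_def using integral_distr[OF id_meas_Delta[OF assms(3)] fm] by simp
    ultimately show "(\<lambda>n. integral\<^sup>L (E n) f) \<longlonglongrightarrow> integral\<^sup>L Ex f" by simp
  qed
  obtain \<Omega> :: "real measure" and Ys :: "nat \<Rightarrow> real \<Rightarrow> real" and Y :: "real \<Rightarrow> real" where
    P: "prob_space \<Omega>" and Ysm[measurable]: "\<And>n. Ys n \<in> borel_measurable \<Omega>"
    and Ysd: "\<And>n. distr \<Omega> borel (Ys n) = E n" and Ym0: "Y \<in> measurable \<Omega> lborel"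
    and Yd: "distr \<Omega> borel Y = Ex" and Yconv: "\<And>w. w \<in> space \<Omega> \<Longrightarrow> (\<lambda>n. Ys n w) \<longlonglongrightarrow> Y w"
    using Skorohod[OF RE REx weak] by blast
  have Ym[measurable]: "Y \<in> borel_measurable \<Omega>"
    using Ym0 by (simp add: measurable_cong_sets[OF refl sets_lborel])
  define Z where "Z n w = cl a b (Ys n w)" for n w
  define Yc where "Yc w = cl a b (Y w)" for w
  define L where "L n w = (INF k\<in>{n..}. Z k w)" for n w
  define U where "U n w = (SUP k\<in>{n..}. Z k w)" for n w
  have Zin: "Z n w \<in> {a..b}" for n w unfolding Z_def by (rule cl_in[OF ab])
  have Ycin: "Yc w \<in> {a..b}" for w unfolding Yc_def by (rule cl_in[OF ab])
  have bddb: "bdd_below ((\<lambda>k. Z k w) ` A)" for w A using Zin by (auto intro: bdd_belowI[where m=a])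
  have bdda: "bdd_above ((\<lambda>k. Z k w) ` A)" for w A using Zin by (auto intro: bdd_aboveI[where M=b])
  have LZ: "L n w \<le> Z n w" for n w unfolding L_def by (rule cINF_lower[OF bddb]) auto
  have ZU: "Z n w \<le> U n w" for n w unfolding U_def by (rule cSUP_upper[OF _ bdda]) auto
  have Lin: "L n w \<in> {a..b}" for n w
  proof -
    have "a \<le> L n w" unfolding L_def by (rule cINF_greatest) (use Zin in auto)
    then show ?thesis using LZ[of n w] Zin[of n w] by auto
  qed
  have Uin: "U n w \<in> {a..b}" for n w
  proof -
    have "U n w \<le> b" unfolding U_def by (rule cSUP_least) (use Zin in auto)
    then show ?thesis using ZU[of n w] Zin[of n w] by auto
  qed
  have Lmono: "L m w \<le> L n w" if "m \<le> n" for m n w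
    unfolding L_def by (rule cINF_superset_mono[OF _ bddb]) (use that in auto)
  have Umono: "U n w \<le> U m w" if "m \<le> n" for m n w
    unfolding U_def by (rule cSUP_subset_mono[OF _ bdda]) (use that in auto)
  have Zm[measurable]: "Z n \<in> borel_measurable \<Omega>" for n
    unfolding Z_def[abs_def] cl_def by measurable
  have Ycm[measurable]: "Yc \<in> borel_measurable \<Omega>"
    unfolding Yc_def[abs_def] cl_def by measurable
  have Lm[measurable]: "L n \<in> borel_measurable \<Omega>" for n
    unfolding L_def[abs_def] by (rule borel_measurable_cINF_real) auto
  have Um[measurable]: "U n \<in> borel_measurable \<Omega>" for n
    unfolding U_def[abs_def] by (rule borel_measurable_cSUP) (auto simp: bdda)
  have Zconv: "(\<lambda>n. Z n w) \<longlonglongrightarrow> Yc w" if "w \<in> space \<Omega>" for w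
    unfolding Z_def Yc_def by (rule cl_tendsto[OF Yconv[OF that]])
  have Lconv: "(\<lambda>n. L n w) \<longlonglongrightarrow> Yc w" if "w \<in> space \<Omega>" for w
    unfolding L_def by (rule inf_tail_conv[OF Zconv[OF that] Zin])
  have Uconv: "(\<lambda>n. U n w) \<longlonglongrightarrow> Yc w" if "w \<in> space \<Omega>" for w
    unfolding U_def by (rule sup_tail_conv[OF Zconv[OF that] Zin])
  have intxs: "integral\<^sup>L (xs n) f = (\<integral>w. f (Z n w) \<partial>\<Omega>)" if "continuous_on {a..b} f" for n and f :: "real \<Rightarrow> real"
  proof -
    have "integral\<^sup>L (xs n) f = integral\<^sup>L (E n) (\<lambda>t. f (cl a b t))"
      unfolding E_def by (rule int_Delta[OF assms(2) ab that])
    also have "\<dots> = (\<integral>w. f (cl a b (Ys n w)) \<partial>\<Omega>)"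
      unfolding Ysd[symmetric] using integral_distr[OF Ysm ext_meas[OF ab that]] by simp
    finally show ?thesis unfolding Z_def .
  qed
  have intx: "integral\<^sup>L x f = (\<integral>w. f (Yc w) \<partial>\<Omega>)" if "continuous_on {a..b} f" for f :: "real \<Rightarrow> real"
  proof -
    have "integral\<^sup>L x f = integral\<^sup>L Ex (\<lambda>t. f (cl a b t))"
      unfolding Ex_def by (rule int_Delta[OF assms(3) ab that])
    also have "\<dots> = (\<integral>w. f (cl a b (Y w)) \<partial>\<Omega>)"
      unfolding Yd[symmetric] using integral_distr[OF Ym ext_meas[OF ab that]] by simp
    finally show ?thesis unfolding Yc_def .
  qed
  define xl where "xl n = distr \<Omega> (restrict_space borel {a..b}) (L n)" for n
  define xu where "xu n = distr \<Omega> (restrict_space borel {a..b}) (U n)" for n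
  have intxl: "integral\<^sup>L (xl n) f = (\<integral>w. f (L n w) \<partial>\<Omega>)" if "continuous_on {a..b} f" for n and f :: "real \<Rightarrow> real"
    unfolding xl_def by (rule int_distr_Delta[OF P Lm Lin ab that])
  have intxu: "integral\<^sup>L (xu n) f = (\<integral>w. f (U n w) \<partial>\<Omega>)" if "continuous_on {a..b} f" for n and f :: "real \<Rightarrow> real"
    unfolding xu_def by (rule int_distr_Delta[OF P Um Uin ab that])
  have key: "(\<integral>w. h (V1 w) \<partial>\<Omega>) \<le> (\<integral>w. h (V2 w) \<partial>\<Omega>)"
    if "continuous_on {a..b} h" "mono_on {a..b} h" "V1 \<in> borel_measurable \<Omega>" "V2 \<in> borel_measurable \<Omega>"
      "\<And>w. V1 w \<in> {a..b}" "\<And>w. V2 w \<in> {a..b}" "\<And>w. V1 w \<le> V2 w" for h :: "real \<Rightarrow> real" and V1 V2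
    using that
    by (intro integral_mono integrable_comp[OF P _ _ ab] mono_onD[OF that(2)]) auto
  have D: "\<forall>n. xl n \<in> Delta a b \<and> xu n \<in> Delta a b"
    unfolding xl_def xu_def using distr_Delta[OF P Lm Lin] distr_Delta[OF P Um Uin] by blast
  have M1: "\<forall>m n. m \<le> n \<longrightarrow> fosd a b (xl m) (xl n)"
  proof (intro allI impI)
    fix m n :: nat assume mn: "m \<le> n"
    show "fosd a b (xl m) (xl n)" unfolding fosd_def
    proof (intro allI impI)
      fix h :: "real \<Rightarrow> real" assume h: "continuous_on {a..b} h \<and> bounded (h ` {a..b}) \<and> mono_on {a..b} h"
      then have hc: "continuous_on {a..b} h" and hm: "mono_on {a..b} h" by auto
      show "(\<integral>t. h t \<partial>(xl m)) \<le> (\<integral>t. h t \<partial>(xl n))"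
        unfolding intxl[OF hc] intxl[OF hc] by (rule key[OF hc hm Lm Lm Lin Lin Lmono[OF mn]])
    qed
  qed
  have M2: "\<forall>m n. m \<le> n \<longrightarrow> fosd a b (xu n) (xu m)"
  proof (intro allI impI)
    fix m n :: nat assume mn: "m \<le> n"
    show "fosd a b (xu n) (xu m)" unfolding fosd_def
    proof (intro allI impI)
      fix h :: "real \<Rightarrow> real" assume h: "continuous_on {a..b} h \<and> bounded (h ` {a..b}) \<and> mono_on {a..b} h"
      then have hc: "continuous_on {a..b} h" and hm: "mono_on {a..b} h" by auto
      show "(\<integral>t. h t \<partial>(xu n)) \<le> (\<integral>t. h t \<partial>(xu m))"
        unfolding intxu[OF hc] intxu[OF hc] by (rule key[OF hc hm Um Um Uin Uin Umono[OF mn]])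
    qed
  qed
  have S: "\<forall>n. fosd a b (xl n) (xs n) \<and> fosd a b (xs n) (xu n)"
  proof
    fix n
    have "fosd a b (xl n) (xs n)" unfolding fosd_def
    proof (intro allI impI)
      fix h :: "real \<Rightarrow> real" assume h: "continuous_on {a..b} h \<and> bounded (h ` {a..b}) \<and> mono_on {a..b} h"
      then have hc: "continuous_on {a..b} h" and hm: "mono_on {a..b} h" by auto
      show "(\<integral>t. h t \<partial>(xl n)) \<le> (\<integral>t. h t \<partial>(xs n))"
        unfolding intxl[OF hc] intxs[OF hc] by (rule key[OF hc hm Lm Zm Lin Zin LZ])
    qed
    moreover have "fosd a b (xs n) (xu n)" unfolding fosd_def
    proof (intro allI impI)
      fix h :: "real \<Rightarrow> real" assume h: "continuous_on {a..b} h \<and> bounded (h ` {a..b}) \<and> mono_on {a..b} h"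
      then have hc: "continuous_on {a..b} h" and hm: "mono_on {a..b} h" by auto
      show "(\<integral>t. h t \<partial>(xs n)) \<le> (\<integral>t. h t \<partial>(xu n))"
        unfolding intxs[OF hc] intxu[OF hc] by (rule key[OF hc hm Zm Um Zin Uin ZU])
    qed
    ultimately show "fosd a b (xl n) (xs n) \<and> fosd a b (xs n) (xu n)" ..
  qed
  have C1: "weak_conv_on a b xl x" unfolding weak_conv_on_def
  proof (intro allI impI)
    fix f :: "real \<Rightarrow> real" assume "continuous_on {a..b} f \<and> bounded (f ` {a..b})"
    then have fc: "continuous_on {a..b} f" by auto
    show "(\<lambda>n. \<integral>t. f t \<partial>(xl n)) \<longlonglongrightarrow> (\<integral>t. f t \<partial>x)"
      unfolding intxl[OF fc] intx[OF fc] by (rule conv_comp[OF P Lm Ycm Lin Ycin ab fc Lconv])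
  qed
  have C2: "weak_conv_on a b xu x" unfolding weak_conv_on_def
  proof (intro allI impI)
    fix f :: "real \<Rightarrow> real" assume "continuous_on {a..b} f \<and> bounded (f ` {a..b})"
    then have fc: "continuous_on {a..b} f" by auto
    show "(\<lambda>n. \<integral>t. f t \<partial>(xu n)) \<longlonglongrightarrow> (\<integral>t. f t \<partial>x)"
      unfolding intxu[OF fc] intx[OF fc] by (rule conv_comp[OF P Um Ycm Uin Ycin ab fc Uconv])
  qed
  show ?thesis using D M1 M2 S C1 C2 by blast
qed

end
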